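(* Let $A\subseteq\{1,\dots,n\}$ and $w\in S_n$. If $\mathrm{Dela}_A(\bar\chi^w)\ne0$, then $\{(j,j+\iota_j(w)):j\notin A,\ \iota_j(w)\ne0\}\subseteq U_A^\vee$.
   Context: Let $q$ be a prime power, $\mathfrak{ut}_n$ the additive group of strictly upper triangular $n\times n$ matrices over $\mathbb{F}_q$. For $w\in S_n$ (one-line notation), $\iota_k(w)=\#\{i<w^{-1}(k):w(i)>k\}$ and $\mathfrak{ut}_w=\{x:x_{ij}\ne0\Rightarrow0<j-i\le\iota_i(w)\}$, a subgroup; $\bar\chi^w$ is the character of $\mathrm{Ind}_{\mathfrak{ut}_w}^{\mathfrak{ut}_n}(\mathbf 1)$ (the permutation character on cosets of $\mathfrak{ut}_w$). For $A\subseteq\{1,\dots,n\}$ and $1\le i<j\le n$, let $c_i=n-\#\{a\in A:a>i\}$, $U_A=\{(i,j):i\in A,j>c_i\}$, $L_A=\{(i,j):i\in A,j\le c_i\}$, $U_A^\vee=\{(i,j):i\notin A,j\le c_i\}$, $R_A=\{(i,j):i\notin A,j>c_i\}$, and $\mathfrak{ut}_A,\mathfrak{l}_A,\mathfrak{ut}_A^\vee,\mathfrak{r}_A$ the subgroups of matrices supported on them. For a function $\gamma$ on $\mathfrak{ut}_n$, $\mathrm{Dela}_A(\gamma)(u',u)=q^{-|L_A|-|R_A|}\sum_{l\in\mathfrak{l}_A,r\in\mathfrak{r}_A}(\frac{-1}{q-1})^{\#\{(i,j):r_{ij}\ne0\}}\gamma(l+u'+u+r)$ for $u'\in\mathfrak{ut}_A^\vee,u\in\mathfrak{ut}_A$.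 *)

theory Defs
  imports Complex_Main "HOL-Combinatorics.Permutations"
begin

text \<open>Matrices over a finite field 'a are functions nat \<Rightarrow> nat \<Rightarrow> 'a
  (entries indexed from 1); a subgroup is described by its support set of positions.\<close>

type_synonym 'a mat = "nat \<Rightarrow> nat \<Rightarrow> 'a"

definition madd :: "'a::plus mat \<Rightarrow> 'a mat \<Rightarrow> 'a mat" where
  "madd x y = (\<lambda>i j. x i j + y i j)"

definition positions :: "nat \<Rightarrow> (nat \<times> nat) set" where
  "positions n = {(i,j). 1 \<le> i \<and> i < j \<and> j \<le> n}"

definition supported :: "(nat \<times> nat) set \<Rightarrow> 'a::zero mat set" where
  "supported S = {x. \<forall>i j. x i j \<noteq> 0 \<longrightarrow> (i,j) \<in> S}"

definition ut :: "nat \<Rightarrow> 'a::zero mat set" where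
  "ut n = supported (positions n)"

definition iota :: "nat \<Rightarrow> (nat \<Rightarrow> nat) \<Rightarrow> nat \<Rightarrow> nat" where
  "iota n w k = card {i \<in> {1..n}. i < inv w k \<and> w i > k}"

definition ut_w :: "nat \<Rightarrow> (nat \<Rightarrow> nat) \<Rightarrow> 'a::zero mat set" where
  "ut_w n w = {x \<in> ut n. \<forall>i j. x i j \<noteq> 0 \<longrightarrow> 0 < j - i \<and> j - i \<le> iota n w i}"

text \<open>Character of Ind from ut_w to ut_n of the trivial character: the permutation
  character on the cosets of ut_w in ut_n.\<close>
definition chibar :: "nat \<Rightarrow> (nat \<Rightarrow> nat) \<Rightarrow> 'a::{finite,field} mat \<Rightarrow> complex" where
  "chibar n w g = of_nat (card {C \<in> {(\<lambda>h. madd x h) ` ut_w n w | x. x \<in> ut n}.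
                                  (\<lambda>c. madd g c) ` C = C})"

definition cA :: "nat \<Rightarrow> nat set \<Rightarrow> nat \<Rightarrow> nat" where
  "cA n A i = n - card {a \<in> A. a > i}"

definition UA :: "nat \<Rightarrow> nat set \<Rightarrow> (nat \<times> nat) set" where
  "UA n A = {(i,j) \<in> positions n. i \<in> A \<and> j > cA n A i}"

definition LA :: "nat \<Rightarrow> nat set \<Rightarrow> (nat \<times> nat) set" where
  "LA n A = {(i,j) \<in> positions n. i \<in> A \<and> j \<le> cA n A i}"

definition UAv :: "nat \<Rightarrow> nat set \<Rightarrow> (nat \<times> nat) set" where
  "UAv n A = {(i,j) \<in> positions n. i \<notin> A \<and> j \<le> cA n A i}"

definition RA :: "nat \<Rightarrow> nat set \<Rightarrow> (nat \<times> nat) set" where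
  "RA n A = {(i,j) \<in> positions n. i \<notin> A \<and> j > cA n A i}"

definition Dela :: "nat \<Rightarrow> nat set \<Rightarrow> ('a::{finite,field} mat \<Rightarrow> complex)
                     \<Rightarrow> 'a mat \<Rightarrow> 'a mat \<Rightarrow> complex" where
  "Dela n A \<gamma> u' u =
     (1 / of_nat (card (UNIV :: 'a set)) ^ (card (LA n A) + card (RA n A))) *
     (\<Sum>l \<in> supported (LA n A). \<Sum>r \<in> supported (RA n A).
        (- 1 / (of_nat (card (UNIV :: 'a set)) - 1)) ^ card {(i,j). r i j \<noteq> 0} *
        \<gamma> (madd (madd (madd l u') u) r))"

end

theory Submission
  imports Defs
begin

lemma madd_assoc: "madd (madd x y) z = madd x (madd y (z::'a::ab_group_add mat))"
  by (rule ext)+ (simp add: madd_def algebra_simps)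

lemma madd_comm: "madd x y = madd y (x::'a::ab_group_add mat)"
  by (rule ext)+ (simp add: madd_def algebra_simps)

lemma ut_w_alt: "ut_w n w = {x. \<forall>i j. x i j \<noteq> 0 \<longrightarrow> (i,j) \<in> positions n \<and> 0 < j - i \<and> j - i \<le> iota n w i}"
  unfolding ut_w_def ut_def supported_def by auto

lemma ut_w_add:
  assumes "x \<in> ut_w n w" "y \<in> ut_w n w"
  shows "madd x (y::'a::ab_group_add mat) \<in> ut_w n w"
proof -
  have "x i j \<noteq> 0 \<or> y i j \<noteq> 0" if "x i j + y i j \<noteq> 0" for i j
    using that by auto
  then show ?thesis using assms unfolding ut_w_alt madd_def mem_Collect_eq by blast
qed

lemma ut_w_diff:
  assumes "x \<in> ut_w n w" "y \<in> ut_w n w"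
  shows "(\<lambda>i j. x i j - y i j) \<in> (ut_w n w :: 'a::ab_group_add mat set)"
proof -
  have "x i j \<noteq> 0 \<or> y i j \<noteq> 0" if "x i j - y i j \<noteq> 0" for i j
    using that by auto
  then show ?thesis using assms unfolding ut_w_alt mem_Collect_eq by blast
qed

lemma madd_left_comm: "madd h (madd x y) = madd x (madd h (y::'a::ab_group_add mat))"
  by (rule ext)+ (simp add: madd_def algebra_simps)

lemma ut_w_shift:
  assumes "h \<in> ut_w n w"
  shows "madd h ` ut_w n w = (ut_w n w :: 'a::ab_group_add mat set)"
proof
  show "madd h ` ut_w n w \<subseteq> ut_w n w" using ut_w_add[OF assms] by auto
  show "ut_w n w \<subseteq> madd h ` ut_w n w"
  proof
    fix y assume y: "y \<in> (ut_w n w :: 'a mat set)"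
    have "(\<lambda>i j. y i j - h i j) \<in> ut_w n w" using ut_w_diff[OF y assms] .
    moreover have "y = madd h (\<lambda>i j. y i j - h i j)" by (rule ext)+ (simp add: madd_def)
    ultimately show "y \<in> madd h ` ut_w n w" by blast
  qed
qed

lemma chibar_inv:
  assumes "h \<in> ut_w n w"
  shows "chibar n w (madd g h) = chibar n w (g :: 'a::{finite,field} mat)"
proof -
  have "\<And>C :: 'a mat set. C \<in> {(\<lambda>h. madd x h) ` ut_w n w | x. x \<in> ut n} \<Longrightarrow>
     ((\<lambda>c. madd (madd g h) c) ` C = C) = ((\<lambda>c. madd g c) ` C = C)"
  proof -
    fix C :: "'a mat set" assume "C \<in> {(\<lambda>h. madd x h) ` ut_w n w | x. x \<in> ut n}"
    then obtain x where C: "C = madd x ` (ut_w n w :: 'a mat set)" by blast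
    have "madd h ` C = C"
    proof -
      have "madd h ` C = madd x ` (madd h ` ut_w n w)"
        unfolding C image_image by (simp add: madd_left_comm)
      then show ?thesis using ut_w_shift[OF assms] C by simp
    qed
    moreover have "(\<lambda>c. madd (madd g h) c) ` C = madd g ` (madd h ` C)"
      by (simp add: image_image madd_assoc)
    ultimately show "((\<lambda>c. madd (madd g h) c) ` C = C) = ((\<lambda>c. madd g c) ` C = C)" by simp
  qed
  then show ?thesis unfolding chibar_def
    by (metis (no_types, lifting) Collect_cong)
qed

lemma card_field_ge2: "card (UNIV::'a::{finite,field} set) \<ge> 2"
proof -
  have "card {0::'a, 1} = 2" by simp
  moreover have "card {0::'a, 1} \<le> card (UNIV::'a set)" by (rule card_mono) auto
  ultimately show ?thesis by simp
qed

lemma sum_weight: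
  fixes X :: complex
  shows "(\<Sum>c\<in>(UNIV::'a::{finite,field} set).
            (if c = 0 then 1 else (-1/(of_nat (card (UNIV::'a set)) - 1))) * X) = 0"
proof -
  let ?q = "card (UNIV::'a set)"
  have q: "?q \<ge> 2" by (rule card_field_ge2)
  have ne: "(of_nat ?q - 1 :: complex) \<noteq> 0"
  proof
    assume "(of_nat ?q - 1 :: complex) = 0"
    then have "(of_nat ?q :: complex) = of_nat 1" by simp
    then have "?q = 1" using of_nat_eq_iff by blast
    with q show False by simp
  qed
  have "(\<Sum>c\<in>(UNIV::'a set). (if c = 0 then 1 else (-1/(of_nat ?q - 1))) * X)
      = X + (\<Sum>c\<in>UNIV - {0::'a}. (-1/(of_nat ?q - 1)) * X)"
    by (subst sum.remove[of UNIV 0]) auto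
  also have "\<dots> = X + of_nat (?q - 1) * ((-1/(of_nat ?q - 1)) * X)"
    by (simp add: card_Diff_singleton)
  also have "of_nat (?q - 1) = (of_nat ?q - 1 :: complex)" using q by (simp add: of_nat_diff)
  finally show ?thesis using ne by (simp add: field_simps)
qed

lemma finite_positions: "finite (positions n)"
proof -
  have "positions n \<subseteq> {1..n} \<times> {1..n}" unfolding positions_def by auto
  then show ?thesis by (rule finite_subset) simp
qed

lemma Dela_zero:
  assumes p: "(a,b) \<in> RA n A"
    and hp: "\<And>c::'a::{finite,field}. (\<lambda>i j. if (i,j) = (a,b) then c else 0) \<in> ut_w n w"
  shows "Dela n A (chibar n w :: 'a mat \<Rightarrow> complex) u' u = 0"
proof -
  let ?w = "(- 1 / (of_nat (card (UNIV :: 'a set)) - 1)) :: complex"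
  define S0 where "S0 = (supported (RA n A - {(a,b)}) :: 'a mat set)"
  define upd where "upd = (\<lambda>(r0::'a mat) c i j. if (i,j) = (a,b) then c else r0 i j)"
  define E where "E = (\<lambda>(c::'a) i j. if (i,j) = (a,b) then c else (0::'a))"
  have hE: "E c \<in> ut_w n w" for c
    using hp[of c] unfolding E_def by simp
  have finRA: "finite (RA n A)"
    by (rule finite_subset[OF _ finite_positions[of n]]) (auto simp: RA_def)
  have img: "supported (RA n A) = (\<lambda>(r0,c). upd r0 c) ` (S0 \<times> UNIV)"
  proof
    show "(\<lambda>(r0,c). upd r0 c) ` (S0 \<times> UNIV) \<subseteq> supported (RA n A)"
      using p by (auto simp: S0_def supported_def upd_def split: if_splits)
    show "supported (RA n A) \<subseteq> (\<lambda>(r0,c). upd r0 c) ` (S0 \<times> UNIV)"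
    proof
      fix r :: "'a mat" assume r: "r \<in> supported (RA n A)"
      let ?r0 = "\<lambda>i j. if (i,j) = (a,b) then 0 else r i j"
      have m: "(?r0, r a b) \<in> S0 \<times> UNIV" using r by (auto simp: S0_def supported_def)
      have e: "r = (\<lambda>(r0,c). upd r0 c) (?r0, r a b)"
        unfolding upd_def case_prod_conv by (rule ext)+ (auto simp del: prod.inject)
      show "r \<in> (\<lambda>(r0,c). upd r0 c) ` (S0 \<times> UNIV)"
        by (rule image_eqI[where f="\<lambda>(r0,c). upd r0 c", OF e m])
    qed
  qed
  have inj: "inj_on (\<lambda>(r0,c). upd r0 c) (S0 \<times> UNIV)"
  proof (rule inj_onI)
    fix x y assume x: "x \<in> S0 \<times> (UNIV::'a set)" and y: "y \<in> S0 \<times> (UNIV::'a set)"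
      and eq: "(\<lambda>(r0,c). upd r0 c) x = (\<lambda>(r0,c). upd r0 c) y"
    obtain r0 c where xe: "x = (r0,c)" by force
    obtain r0' c' where ye: "y = (r0',c')" by force
    have e: "upd r0 c = upd r0' c'" using eq xe ye by simp
    have "c = c'" using fun_cong[OF fun_cong[OF e, of a], of b] by (simp add: upd_def)
    moreover have "r0 = r0'"
    proof (rule ext, rule ext)
      fix i j
      show "r0 i j = r0' i j"
      proof (cases "(i,j) = (a,b)")
        case True
        have "r0 \<in> S0" "r0' \<in> S0" using x y xe ye by auto
        then have "r0 a b = 0" "r0' a b = 0" unfolding S0_def supported_def by blast+
        then show ?thesis using True by simp
      next
        case False
        then show ?thesis using fun_cong[OF fun_cong[OF e, of i], of j] by (auto simp: upd_def)
      qed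
    qed
    ultimately show "x = y" using xe ye by simp
  qed
  have inner: "(\<Sum>r \<in> supported (RA n A). ?w ^ card {(i,j). r i j \<noteq> 0} *
        chibar n w (madd G r)) = 0" for G :: "'a mat"
  proof -
    have key: "?w ^ card {(i,j). upd r0 c i j \<noteq> 0} * chibar n w (madd G (upd r0 c))
        = (if c = 0 then 1 else ?w) * (?w ^ card {(i,j). r0 i j \<noteq> 0} * chibar n w (madd G r0))"
      if r0: "r0 \<in> S0" for r0 c
    proof -
      have N0fin: "finite {(i,j). r0 i j \<noteq> 0}"
        by (rule finite_subset[OF _ finRA]) (use r0 in \<open>auto simp: S0_def supported_def\<close>)
      have pN: "(a,b) \<notin> {(i,j). r0 i j \<noteq> 0}" using r0 by (auto simp: S0_def supported_def)
      have set: "{(i,j). upd r0 c i j \<noteq> 0} =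
          (if c = 0 then {(i,j). r0 i j \<noteq> 0} else insert (a,b) {(i,j). r0 i j \<noteq> 0})"
        using pN by (auto simp: upd_def split: if_splits)
      have cd: "card {(i,j). upd r0 c i j \<noteq> 0} =
          (if c = 0 then card {(i,j). r0 i j \<noteq> 0} else Suc (card {(i,j). r0 i j \<noteq> 0}))"
        unfolding set using N0fin pN by simp
      have u: "upd r0 c = madd r0 (E c)"
        using pN by (intro ext) (auto simp: upd_def E_def madd_def)
      have ch: "chibar n w (madd G (upd r0 c)) = chibar n w (madd G r0)"
        unfolding u madd_assoc[symmetric] by (rule chibar_inv) (rule hE)
      show ?thesis unfolding ch cd by simp
    qed
    have "(\<Sum>r \<in> supported (RA n A). ?w ^ card {(i,j). r i j \<noteq> 0} * chibar n w (madd G r))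
       = (\<Sum>x \<in> S0 \<times> UNIV. (\<lambda>r. ?w ^ card {(i,j). r i j \<noteq> 0} * chibar n w (madd G r))
             ((\<lambda>(r0,c). upd r0 c) x))"
      unfolding img by (rule sum.reindex[OF inj, unfolded comp_def])
    also have "\<dots> = (\<Sum>r0 \<in> S0. \<Sum>c \<in> (UNIV::'a set).
          ?w ^ card {(i,j). upd r0 c i j \<noteq> 0} * chibar n w (madd G (upd r0 c)))"
      by (subst sum.cartesian_product) (simp add: case_prod_beta)
    also have "\<dots> = (\<Sum>r0 \<in> S0. \<Sum>c \<in> (UNIV::'a set).
          (if c = 0 then 1 else ?w) * (?w ^ card {(i,j). r0 i j \<noteq> 0} * chibar n w (madd G r0)))"
      by (intro sum.cong refl key)
    also have "\<dots> = 0" by (simp only: sum_weight sum.neutral_const)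
    finally show ?thesis .
  qed
  show ?thesis unfolding Dela_def
    by (simp only: inner sum.neutral_const mult_zero_right)
qed

lemma iota_le: assumes "w permutes {1..n}" shows "iota n w j \<le> n - j"
proof -
  have "{i \<in> {1..n}. i < inv w j \<and> w i > j} \<subseteq> {i \<in> {1..n}. w i \<in> {j<..n}}"
    using permutes_in_image[OF assms] by fastforce
  moreover have "card {i \<in> {1..n}. w i \<in> {j<..n}} \<le> card {j<..n}"
  proof -
    have "inj_on w {i \<in> {1..n}. w i \<in> {j<..n}}"
      using permutes_inj[OF assms] by (auto intro: inj_on_subset)
    moreover have "w ` {i \<in> {1..n}. w i \<in> {j<..n}} \<subseteq> {j<..n}" by auto
    ultimately show ?thesis using card_inj_on_le finite_greaterThanAtMost by blast
  qed
  moreover have "finite {i \<in> {1..n}. w i \<in> {j<..n}}" by simp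
  ultimately have "iota n w j \<le> card {j<..n}" unfolding iota_def
    using card_mono le_trans by blast
  then show ?thesis by simp
qed

theorem lemma5p4:
  fixes n :: nat and A :: "nat set" and w :: "nat \<Rightarrow> nat"
  assumes "A \<subseteq> {1..n}"
    and "w permutes {1..n}"
    and "\<exists>u' \<in> supported (UAv n A). \<exists>u \<in> supported (UA n A).
           Dela n A (chibar n w :: 'a::{finite,field} mat \<Rightarrow> complex) u' u \<noteq> 0"
  shows "{(j, j + iota n w j) | j. j \<in> {1..n} \<and> j \<notin> A \<and> iota n w j \<noteq> 0} \<subseteq> UAv n A"
proof (rule ccontr)
  assume "\<not> ?thesis"
  then obtain j where j: "j \<in> {1..n}" "j \<notin> A" "iota n w j \<noteq> 0"
    and nU: "(j, j + iota n w j) \<notin> UAv n A" by blast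
  have le: "iota n w j \<le> n - j" by (rule iota_le[OF assms(2)])
  have pos: "(j, j + iota n w j) \<in> positions n" using j le unfolding positions_def by auto
  then have R: "(j, j + iota n w j) \<in> RA n A" using nU j unfolding UAv_def RA_def by auto
  have hp: "(\<lambda>i k. if (i,k) = (j, j + iota n w j) then c else 0) \<in> ut_w n w" for c :: 'a
    using pos j(3) unfolding ut_w_alt by auto
  from assms(3) obtain u' u where "Dela n A (chibar n w :: 'a mat \<Rightarrow> complex) u' u \<noteq> 0" by blast
  with Dela_zero[OF R hp] show False by blast
qed

end
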